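(* Let $\mathbf v=(v_1,\dots,v_m)$ and $\mathbf k=(k_1,\dots,k_m)$ be $m$-tuples of positive integers with $k_i\le v_i$ for all $i$ and $\sum_i k_i\ge2$. Let $\mathcal D$ be a ${\rm GC}(\mathbf v,\mathbf k,2)$ with $N$ blocks and let $I\subseteq\{1,\dots,m\}$ be non-empty. Then, provided $\mathbf k^I\neq(1)$, there exists a ${\rm GC}(\mathbf v^I,\mathbf k^I,2)$ with $N$ blocks, and in particular $C(\mathbf v,\mathbf k,2)\ge C(\mathbf v^I,\mathbf k^I,2)$.
   Context: For an $m$-tuple $\mathbf x$ and a non-empty $I\subseteq\{1,\dots,m\}$, the restriction $\mathbf x^I$ is the tuple of entries of $\mathbf x$ in positions from $I$ (in increasing order). For tuples $\mathbf v,\mathbf k$ of positive integers of the same length $n$ with $\mathbf k\le\mathbf v$ entrywise: let $X_1,\dots,X_n$ be pairwise disjoint sets with $|X_i|=v_i$; a block is an $n$-tuple $(B_1,\dots,B_n)$ with $B_i\subseteq X_i$, $|B_i|=k_i$; an $n$-tuple of sets $(T_1,\dots,T_n)$ is $(\mathbf v,\mathbf k,2)$-admissible if $T_i\subseteq X_i$, $|T_i|\le k_i$ and $\sum|T_i|=2$, and is contained in a block if $T_i\subseteq B_i$ for all $i$. A ${\rm GC}(\mathbf v,\mathbf k,2)$ is a finite family (repetitions allowed) of blocks containing every admissible tuple in at least one block; $C(\mathbf v,\mathbf k,2)$ is its minimum possible number of blocks, with $C=0$ if no design exists. *)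

theory Defs
  imports Main
begin

text \<open>Tuples are lists; positions are 0-based (position i of a list corresponds
to index i+1 in the paper). The point set X_i is represented by {i} \<times> {..<v!i};
since the X_i are pairwise disjoint we store the i-th component B_i of a block
(or T_i of an admissible tuple) as a subset of {..<v!i}.
The restriction x^I is nths x I (entries at positions in I, increasing order).\<close>

definition is_block :: "nat list \<Rightarrow> nat list \<Rightarrow> nat set list \<Rightarrow> bool" where
  "is_block v k B \<longleftrightarrow> length B = length v \<and>
     (\<forall>i<length v. B!i \<subseteq> {..<v!i} \<and> card (B!i) = k!i)"

definition admissible :: "nat list \<Rightarrow> nat list \<Rightarrow> nat set list \<Rightarrow> bool" where
  "admissible v k T \<longleftrightarrow> length T = length v \<and>
     (\<forall>i<length v. T!i \<subseteq> {..<v!i} \<and> card (T!i) \<le> k!i) \<and>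
     (\<Sum>i<length v. card (T!i)) = 2"

definition contained_in :: "nat set list \<Rightarrow> nat set list \<Rightarrow> bool" where
  "contained_in T B \<longleftrightarrow> (\<forall>i<length T. T!i \<subseteq> B!i)"

text \<open>A GC(v,k,2): a finite family (list, repetitions allowed) of blocks covering
every admissible tuple. Its number of blocks is the length of the list.\<close>
definition is_GC :: "nat list \<Rightarrow> nat list \<Rightarrow> nat set list list \<Rightarrow> bool" where
  "is_GC v k D \<longleftrightarrow> (\<forall>B\<in>set D. is_block v k B) \<and>
     (\<forall>T. admissible v k T \<longrightarrow> (\<exists>B\<in>set D. contained_in T B))"

definition C_num :: "nat list \<Rightarrow> nat list \<Rightarrow> nat" where
  "C_num v k = (if \<exists>D. is_GC v k D then (LEAST N. \<exists>D. is_GC v k D \<and> length D = N) else 0)"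

end

theory Submission
  imports Defs
begin

lemma nths_eq_map:
  assumes "length xs = m" "I \<subseteq> {..<m}"
  shows "nths xs I = map ((!) xs) (sorted_list_of_set I)"
proof -
  have "xs = map ((!) xs) [0..<m]" using assms(1) map_nth[of xs] by simp
  hence "nths xs I = map ((!) xs) (nths [0..<m] I)"
    by (metis nths_map)
  moreover have "nths [0..<m] I = sorted_list_of_set I"
  proof -
    have "set (nths [0..<m] I) = I" using assms(2) by (auto simp: set_nths) (metis lessThan_iff nth_upt add_0 subsetD)
    moreover have "finite I" using assms(2) finite_subset by blast
    ultimately show ?thesis
    proof -
      have "sorted (nths [0..<m] I)" by (simp add: sorted_nths)
      moreover have "distinct (nths [0..<m] I)" by simp
      ultimately show ?thesis
        using sorted_list_of_set_unique[of I "nths [0..<m] I"] \<open>finite I\<close> \<open>set (nths [0..<m] I) = I\<close>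
        by (metis strict_sorted_iff distinct_card)
    qed
  qed
  ultimately show ?thesis by simp
qed

lemma restrict_GC:
  assumes lv: "length v = m" and lk: "length k = m"
    and I: "I \<subseteq> {..<m}"
    and GC: "is_GC v k D"
  shows "is_GC (nths v I) (nths k I) (map (\<lambda>B. nths B I) D)"
proof -
  define e where "e = sorted_list_of_set I"
  define n where "n = length e"
  have fin: "finite I" using I finite_subset by blast
  have de: "distinct e" and se: "set e = I" using fin by (auto simp: e_def)
  have eI: "j < n \<Longrightarrow> e!j \<in> I" for j using se n_def nth_mem by blast
  have em: "j < n \<Longrightarrow> e!j < m" for j using eI I by blast
  have nv: "nths v I = map ((!) v) e" using nths_eq_map[OF lv I] e_def by simp
  have nk: "nths k I = map ((!) k) e" using nths_eq_map[OF lk I] e_def by simp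
  have bij: "bij_betw ((!) e) {..<n} I"
    using de se n_def by (simp add: bij_betw_def inj_on_nth set_conv_nth) (auto simp: set_conv_nth)
  define f where "f i = (SOME j. j < n \<and> e!j = i)" for i
  have f1: "i \<in> I \<Longrightarrow> f i < n \<and> e!(f i) = i" for i
  proof -
    assume "i \<in> I"
    then obtain j where "j < n" "e!j = i" using se n_def by (auto simp: in_set_conv_nth)
    thus ?thesis unfolding f_def by (metis (mono_tags, lifting) someI)
  qed
  have f2: "j < n \<Longrightarrow> f (e!j) = j" for j
    using f1[OF eI] de n_def nth_eq_iff_index_eq by metis
  show ?thesis unfolding is_GC_def
  proof (intro conjI allI impI ballI)
    fix B' assume "B' \<in> set (map (\<lambda>B. nths B I) D)"
    then obtain B where B: "B \<in> set D" and B': "B' = nths B I" by auto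
    have bb: "is_block v k B" using GC B by (simp add: is_GC_def)
    hence lB: "length B = m" using lv by (simp add: is_block_def)
    have "B' = map ((!) B) e" using nths_eq_map[OF lB I] B' e_def by simp
    thus "is_block (nths v I) (nths k I) B'" using bb em
      unfolding nv nk is_block_def n_def by (auto simp: lv)
  next
    fix T' assume adm: "admissible (nths v I) (nths k I) T'"
    have lT': "length T' = n" using adm nv n_def by (simp add: admissible_def)
    have aT': "\<forall>j<n. T'!j \<subseteq> {..<v!(e!j)} \<and> card (T'!j) \<le> k!(e!j)"
      using adm nv nk n_def by (simp add: admissible_def)
    have sT': "(\<Sum>j<n. card (T'!j)) = 2" using adm nv n_def by (simp add: admissible_def)
    define T where "T = map (\<lambda>i. if i \<in> I then T'!(f i) else {}) [0..<m]"
    have lT: "length T = m" by (simp add: T_def)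
    have Tn: "i < m \<Longrightarrow> T!i = (if i \<in> I then T'!(f i) else {})" for i by (simp add: T_def)
    have "admissible v k T" unfolding admissible_def
    proof (intro conjI allI impI)
      show "length T = length v" using lT lv by simp
    next
      fix i assume "i < length v"
      thus "T!i \<subseteq> {..<v!i}"
        using Tn lv aT' f1 by (cases "i \<in> I") fastforce+
    next
      fix i assume "i < length v"
      thus "card (T!i) \<le> k!i"
        using Tn lv aT' f1 by (cases "i \<in> I") fastforce+
    next
      have "(\<Sum>i<length v. card (T!i)) = (\<Sum>i\<in>I. card (T!i))"
        using I lv Tn by (intro sum.mono_neutral_right) auto
      also have "\<dots> = (\<Sum>j<n. card (T!(e!j)))"
        using sum.reindex_bij_betw[OF bij, of "\<lambda>i. card (T!i)"] by simp
      also have "\<dots> = (\<Sum>j<n. card (T'!j))"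
        using Tn em eI f2 by (intro sum.cong) auto
      finally show "(\<Sum>i<length v. card (T!i)) = 2" using sT' by simp
    qed
    then obtain B where B: "B \<in> set D" and cB: "contained_in T B" using GC by (auto simp: is_GC_def)
    have lB: "length B = m" using GC B lv by (simp add: is_GC_def is_block_def)
    have "nths B I = map ((!) B) e" using nths_eq_map[OF lB I] e_def by simp
    moreover have "contained_in T' (map ((!) B) e)"
      unfolding contained_in_def
    proof (intro allI impI)
      fix j assume j: "j < length T'"
      hence "T!(e!j) \<subseteq> B!(e!j)" using cB lT lT' em by (simp add: contained_in_def)
      thus "T'!j \<subseteq> map ((!) B) e ! j" using Tn em eI f2 j lT' n_def by simp
    qed
    ultimately show "\<exists>B'\<in>set (map (\<lambda>B. nths B I) D). contained_in T' B'" using B by force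
  qed
qed

theorem proposition3p8:
  fixes v k :: "nat list" and m N :: nat and D :: "nat set list list" and I :: "nat set"
  assumes "length v = m" and "length k = m"
    and "\<forall>i<m. 0 < k!i \<and> k!i \<le> v!i"
    and "sum_list k \<ge> 2"
    and "is_GC v k D" and "length D = N"
    and "I \<subseteq> {..<m}" and "I \<noteq> {}"
    and "nths k I \<noteq> [1]"
  shows "(\<exists>D'. is_GC (nths v I) (nths k I) D' \<and> length D' = N) \<and>
         C_num (nths v I) (nths k I) \<le> C_num v k"
proof
  show "\<exists>D'. is_GC (nths v I) (nths k I) D' \<and> length D' = N"
    using restrict_GC[OF assms(1,2,7,5)] assms(6) by auto
next
  have ex: "\<exists>N D. is_GC v k D \<and> length D = N" using assms(5) by auto
  let ?N0 = "LEAST N. \<exists>D. is_GC v k D \<and> length D = N"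
  obtain D0 where D0: "is_GC v k D0" "length D0 = ?N0"
    using LeastI_ex[OF ex] by blast
  have r: "is_GC (nths v I) (nths k I) (map (\<lambda>B. nths B I) D0)"
    using restrict_GC[OF assms(1,2,7) D0(1)] .
  have "C_num (nths v I) (nths k I) \<le> ?N0"
    unfolding C_num_def using r D0(2)
    by (auto intro!: Least_le)
  moreover have "C_num v k = ?N0" using assms(5) by (auto simp: C_num_def)
  ultimately show "C_num (nths v I) (nths k I) \<le> C_num v k" by simp
qed

end
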